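(* Let $f\in\mathbb R[x_1,\ldots,x_d]$ be a convenient non-degenerate weighted homogeneous polynomial, let $\delta_i$ be the exponent of the pure monomial $x_i^{\delta_i}$ of $f$, and for $I\subset\{1,\ldots,d\}$ let $\delta_I=\operatorname{lcm}\{\delta_i:i\in I\}$. For $\varnothing\neq I\subset\{1,\ldots,d\}$ let $\tau_I$ be the compact face of $\Gamma_f$ meeting the $x_i$-axis exactly for $i\in I$. Then, in $\widehat{\mathcal M}[[T]]$, $$S_{\sigma(\tau_I)}(T)=\frac{\mathbb 1}{(\mathbb L-\mathbb 1)^{d-|I|}}\sum_{r\ge1}\mathbb L^{-\sum_{i=1}^d\lfloor r\delta_I/\delta_i\rfloor}T^{r\delta_I}.$$
   Context: $\mathcal{AS}$-sets: semialgebraic $S\subset\mathbb P^n_{\mathbb R}$ such that for every real analytic arc $\gamma:(-1,1)\to\mathbb P^n_{\mathbb R}$ with $\gamma((-1,0))\subset S$ there is $\varepsilon>0$ with $\gamma((0,\varepsilon))\subset S$. For $n\ge1$, $K_0(\mathcal{AS}^n_{\mathrm{mon}})$ is the Grothendieck group of symbols $[\varphi_X:\mathbb R^*\circlearrowright X\to\mathbb R^*]$ ($X$ an $\mathcal{AS}$-set with $\mathbb R^*$-action, action and $\varphi_X$ with $\mathcal{AS}$ graphs, $\varphi_X(\lambda x)=\lambda^n\varphi_X(x)$), modulo equivariant $\mathcal{AS}$-bijections over $\mathbb R^*$, scissor relations for invariant closed $\mathcal{AS}$-subsets, and independence of the lifting of the action to $Y\times\mathbb R^m$ for symbols $\varphi_Y\circ\operatorname{pr}_Y$;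 product is fiber product over $\mathbb R^*$; the Grothendieck ring $K_0(\mathcal{AS})$ acts by $[A]\cdot[\varphi_X]=[\varphi_X\circ\operatorname{pr}_X:A\times X\to\mathbb R^*]$. $K_0(\mathcal{AS}_{\mathrm{mon}})=\varinjlim_nK_0(\mathcal{AS}^n_{\mathrm{mon}})$ (for $n=km$, a level-$m$ action $\lambda\cdot x$ is replaced by $\lambda^k\cdot x$). $\mathbb 1=[\mathrm{id}:\mathbb R^*\to\mathbb R^*]$ with $\lambda\cdot r=\lambda r$, $\mathbb L=[\mathbb R]\cdot\mathbb 1$, $\mathcal M=K_0(\mathcal{AS}_{\mathrm{mon}})[\mathbb L^{-1}]$, $\widehat{\mathcal M}$ the completion with respect to the filtration spanned by $[S]\mathbb L^{-i}$ with $i-\dim S\ge m$ (in which $\mathbb L-\mathbb 1$ is invertible). For $f=\sum c_\nu x^\nu$: $\Gamma_f=\operatorname{Conv}(\bigcup_{c_\nu\neq0}(\nu+\mathbb R^d_{\ge0}))$, $m(k)=\inf\{k\cdot x:x\in\Gamma_f\}$ for $k\in\mathbb R^d_{\ge0}$, $\sigma(\tau)=\{k\in\mathbb R^d_{\ge0}:\{x\in\Gamma_f:k\cdot x=m(k)\}=\tau\}$, $S_{\sigma(\tau)}(T)=\sum_{k\in\sigma(\tau)\cap\mathbb N^d}\mathbb L^{-|k|}T^{m(k)}$, $|k|=\sum_ik_i$. $f$ is convenient if each $x_i^{\delta_i}$, $\delta_i\ge1$, appears in $f$; non-degenerate if for each compact face $\tau$ the partials of $f_\tau=\sum_{\nu\in\tau}c_\nu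 x^\nu$ have no common zero in $(\mathbb R^* )^d$; weighted homogeneous if $f(\lambda^{w_1}x_1,\ldots,\lambda^{w_d}x_d)=\lambda^wf(x)$ for some $w_i,w\in\mathbb N_{>0}$. For such $f$ the compact faces of $\Gamma_f$ are exactly the convex hulls of $\{\delta_ie_i:i\in I\}$ for nonempty $I$. *)

theory Defs
  imports "HOL-Analysis.Analysis" "HOL-Computational_Algebra.Formal_Laurent_Series"
begin

text \<open>A real polynomial in d variables (d = CARD('n)) is encoded by its coefficient
  function c on exponent vectors nu :: 'n => nat, with finite support.\<close>

definition pure_mono :: "'n \<Rightarrow> nat \<Rightarrow> ('n \<Rightarrow> nat)" where
  "pure_mono i a = (\<lambda>j. if j = i then a else 0)"

definition exp_vec :: "('n::finite \<Rightarrow> nat) \<Rightarrow> real^'n" where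
  "exp_vec nu = (\<chi> i. real (nu i))"

definition poly_eval :: "(('n::finite \<Rightarrow> nat) \<Rightarrow> real) \<Rightarrow> real^'n \<Rightarrow> real" where
  "poly_eval c x = (\<Sum>nu\<in>{nu. c nu \<noteq> 0}. c nu * (\<Prod>i\<in>UNIV. (x$i) ^ (nu i)))"

definition partial_eval :: "(('n::finite \<Rightarrow> nat) \<Rightarrow> real) \<Rightarrow> 'n \<Rightarrow> real^'n \<Rightarrow> real" where
  "partial_eval c j x = (\<Sum>nu\<in>{nu. c nu \<noteq> 0}.
      c nu * real (nu j) * (\<Prod>i\<in>UNIV. (x$i) ^ (nu i - (if i = j then 1 else 0))))"

definition newton_polyhedron :: "(('n::finite \<Rightarrow> nat) \<Rightarrow> real) \<Rightarrow> (real^'n) set" where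
  "newton_polyhedron c =
     convex hull (\<Union>nu\<in>{nu. c nu \<noteq> 0}. {x. \<forall>i. real (nu i) \<le> x$i})"

definition supp_fun :: "(real^'n) set \<Rightarrow> real^'n \<Rightarrow> real" where
  "supp_fun G k = Inf ((\<lambda>x. k \<bullet> x) ` G)"

definition dual_cone :: "(real^'n) set \<Rightarrow> (real^'n) set \<Rightarrow> (real^'n) set" where
  "dual_cone G tau = {k. (\<forall>i. 0 \<le> k$i) \<and> {x\<in>G. k \<bullet> x = supp_fun G k} = tau}"

definition face_poly :: "(('n::finite \<Rightarrow> nat) \<Rightarrow> real) \<Rightarrow> (real^'n) set \<Rightarrow> (('n \<Rightarrow> nat) \<Rightarrow> real)" where
  "face_poly c tau = (\<lambda>nu. if exp_vec nu \<in> tau then c nu else 0)"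

definition compact_face :: "(('n::finite \<Rightarrow> nat) \<Rightarrow> real) \<Rightarrow> (real^'n) set \<Rightarrow> bool" where
  "compact_face c tau \<longleftrightarrow> tau face_of newton_polyhedron c \<and> compact tau \<and> tau \<noteq> {}"

definition convenient :: "(('n::finite \<Rightarrow> nat) \<Rightarrow> real) \<Rightarrow> bool" where
  "convenient c \<longleftrightarrow> (\<forall>i. \<exists>\<delta>\<ge>1. c (pure_mono i \<delta>) \<noteq> 0)"

definition non_degenerate :: "(('n::finite \<Rightarrow> nat) \<Rightarrow> real) \<Rightarrow> bool" where
  "non_degenerate c \<longleftrightarrow> (\<forall>tau. compact_face c tau \<longrightarrow>
      \<not> (\<exists>x::real^'n. (\<forall>i. x$i \<noteq> 0) \<and> (\<forall>j. partial_eval (face_poly c tau) j x = 0)))"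

definition weighted_homogeneous :: "(('n::finite \<Rightarrow> nat) \<Rightarrow> real) \<Rightarrow> bool" where
  "weighted_homogeneous c \<longleftrightarrow> (\<exists>(w::'n \<Rightarrow> nat) (W::nat). (\<forall>i. w i > 0) \<and> W > 0 \<and>
      (\<forall>(l::real) x. poly_eval c (\<chi> i. l ^ (w i) * x$i) = l ^ W * poly_eval c x))"

text \<open>Model of the coefficient ring: u = fls_X stands for L^{-1}, so L = fls_X_inv and 1 = 1.
  S_sigma(tau)(T) = sum_{k in sigma(tau) cap N^d} L^{-|k|} T^{m(k)}; the coefficient of T^n is the
  (convergent) series sum_j #{k : m(k) = n, |k| = j} L^{-j}.\<close>
definition S_series :: "(real^'n::finite) set \<Rightarrow> (real^'n) set \<Rightarrow> real fls fps" where
  "S_series G tau = Abs_fps (\<lambda>n. fps_to_fls (Abs_fps (\<lambda>j. of_nat (card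
      {k::'n \<Rightarrow> nat. exp_vec k \<in> dual_cone G tau \<and> supp_fun G (exp_vec k) = real n
                      \<and> sum k UNIV = j}))))"

end

theory Submission
  imports Defs
begin

lemma univ_indep:
  fixes g :: "nat \<Rightarrow> real"
  assumes "finite A" "\<And>t. (\<Sum>a\<in>A. g a * t ^ a) = 0" "a \<in> A"
  shows "g a = 0"
proof -
  define p where "p = (\<Sum>a\<in>A. monom (g a) a)"
  have "\<forall>t. poly p t = 0" using assms(2) by (simp add: p_def poly_sum poly_monom)
  hence "p = 0" using poly_all_0_iff_0 by blast
  hence "coeff p a = 0" by simp
  moreover have "coeff p a = g a" unfolding p_def coeff_sum
    using assms(1,3) by (simp add: coeff_monom)
  ultimately show ?thesis by simp
qed

lemma multi_indep_gen:
  fixes V :: "'n::finite set"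
  assumes "finite V"
  shows "\<forall>S (b :: ('n \<Rightarrow> nat) \<Rightarrow> real). finite S \<longrightarrow> (\<forall>\<nu>\<in>S. \<forall>i. i \<notin> V \<longrightarrow> \<nu> i = 0) \<longrightarrow>
     (\<forall>x::real^'n. (\<Sum>\<nu>\<in>S. b \<nu> * (\<Prod>i\<in>UNIV. x$i ^ \<nu> i)) = 0) \<longrightarrow> (\<forall>\<nu>\<in>S. b \<nu> = 0)"
  using assms
proof (induction V rule: finite_induct)
  case empty
  show ?case
  proof (intro allI impI ballI)
    fix S and b :: "('n \<Rightarrow> nat) \<Rightarrow> real" and \<nu>
    assume fS: "finite S" and sup: "\<forall>\<nu>\<in>S. \<forall>i. i \<notin> {} \<longrightarrow> \<nu> i = 0"
      and z: "\<forall>x::real^'n. (\<Sum>\<nu>\<in>S. b \<nu> * (\<Prod>i\<in>UNIV. x$i ^ \<nu> i)) = 0" and nS: "\<nu> \<in> S"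
    have "\<forall>\<mu>\<in>S. \<mu> = (\<lambda>_. 0)" using sup by auto
    hence "S = {\<lambda>_. 0}" using nS by (metis empty_iff insertI1 subsetI subset_antisym singletonD)
    hence "\<nu> = (\<lambda>_. 0)" using nS by simp
    with z \<open>S = {\<lambda>_. 0}\<close> show "b \<nu> = 0" by simp
  qed
next
  case (insert j V)
  show ?case
  proof (intro allI impI ballI)
    fix S and b :: "('n \<Rightarrow> nat) \<Rightarrow> real" and \<nu>
    assume fS: "finite S" and sup: "\<forall>\<nu>\<in>S. \<forall>i. i \<notin> insert j V \<longrightarrow> \<nu> i = 0"
      and z: "\<forall>x::real^'n. (\<Sum>\<nu>\<in>S. b \<nu> * (\<Prod>i\<in>UNIV. x$i ^ \<nu> i)) = 0" and nS: "\<nu> \<in> S"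
    define M where "M x \<mu> = (\<Prod>i\<in>UNIV. (if i = j then 1 else x$i) ^ \<mu> i)" for x :: "real^'n" and \<mu> :: "'n \<Rightarrow> nat"
    define A where "A = (\<lambda>\<mu>. \<mu> j) ` S"
    have fA: "finite A" using fS by (simp add: A_def)
    have split: "(\<Prod>i\<in>UNIV. (\<chi> i. if i = j then t else x$i)$i ^ \<mu> i) = t ^ \<mu> j * M x \<mu>"
      for t x and \<mu> :: "'n \<Rightarrow> nat"
    proof -
      have "(\<Prod>i\<in>UNIV. (\<chi> i. if i = j then t else x$i)$i ^ \<mu> i)
          = (\<Prod>i\<in>UNIV. (if i = j then t ^ \<mu> j else 1) * (if i = j then 1 else x$i) ^ \<mu> i)"
        by (intro prod.cong) auto
      also have "\<dots> = t ^ \<mu> j * M x \<mu>" by (simp add: prod.distrib M_def)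
      finally show ?thesis .
    qed
    have inner: "(\<Sum>\<mu>\<in>{\<mu>\<in>S. \<mu> j = a}. b \<mu> * M x \<mu>) = 0" if aA: "a \<in> A" for a x
    proof -
      have h: "(\<Sum>a\<in>A. (\<Sum>\<mu>\<in>{\<mu>\<in>S. \<mu> j = a}. b \<mu> * M x \<mu>) * t ^ a) = 0" for t
      proof -
        have "(\<Sum>a\<in>A. (\<Sum>\<mu>\<in>{\<mu>\<in>S. \<mu> j = a}. b \<mu> * M x \<mu>) * t ^ a)
            = (\<Sum>a\<in>A. (\<Sum>\<mu>\<in>{\<mu>\<in>S. \<mu> j = a}. b \<mu> * (t ^ \<mu> j * M x \<mu>)))"
          by (intro sum.cong refl, unfold sum_distrib_right, intro sum.cong refl) auto
        also have "\<dots> = (\<Sum>\<mu>\<in>S. b \<mu> * (t ^ \<mu> j * M x \<mu>))"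
          by (rule sum.group) (auto simp: fS fA A_def)
        also have "\<dots> = (\<Sum>\<mu>\<in>S. b \<mu> * (\<Prod>i\<in>UNIV. (\<chi> i. if i = j then t else x$i)$i ^ \<mu> i))"
          by (simp only: split)
        also have "\<dots> = 0" using z by blast
        finally show ?thesis .
      qed
      show ?thesis
        using univ_indep[where g="\<lambda>a. \<Sum>\<mu>\<in>{\<mu>\<in>S. \<mu> j = a}. b \<mu> * M x \<mu>", OF fA h aA] by simp
    qed
    define a where "a = \<nu> j"
    have aA: "a \<in> A" using nS by (simp add: A_def a_def)
    define S' where "S' = (\<lambda>\<mu>. \<mu>(j:=0)) ` {\<mu>\<in>S. \<mu> j = a}"
    define b' where "b' \<mu> = b (\<mu>(j:=a))" for \<mu>
    have injS: "inj_on (\<lambda>\<mu>. \<mu>(j:=0)) {\<mu>\<in>S. \<mu> j = a}"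
    proof (rule inj_onI)
      fix u v assume "u \<in> {\<mu>\<in>S. \<mu> j = a}" "v \<in> {\<mu>\<in>S. \<mu> j = a}" "u(j:=0) = v(j:=0)"
      hence uv: "u j = v j" "u(j:=0) = v(j:=0)" by auto
      show "u = v"
      proof
        fix i show "u i = v i" using uv(1) fun_cong[OF uv(2), of i] by (cases "i = j") simp_all
      qed
    qed
    have IH1: "finite S'" using fS by (simp add: S'_def)
    have IH2: "\<forall>\<mu>\<in>S'. \<forall>i. i \<notin> V \<longrightarrow> \<mu> i = 0" using sup by (auto simp: S'_def)
    have IH3: "\<forall>x::real^'n. (\<Sum>\<mu>\<in>S'. b' \<mu> * (\<Prod>i\<in>UNIV. x$i ^ \<mu> i)) = 0"
    proof
      fix x :: "real^'n"
      have "(\<Sum>\<mu>\<in>S'. b' \<mu> * (\<Prod>i\<in>UNIV. x$i ^ \<mu> i))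
          = (\<Sum>\<mu>\<in>{\<mu>\<in>S. \<mu> j = a}. b' (\<mu>(j:=0)) * (\<Prod>i\<in>UNIV. x$i ^ (\<mu>(j:=0)) i))"
        unfolding S'_def by (rule sum.reindex[OF injS, unfolded comp_def])
      also have "\<dots> = (\<Sum>\<mu>\<in>{\<mu>\<in>S. \<mu> j = a}. b \<mu> * M x \<mu>)"
      proof (intro sum.cong refl)
        fix \<mu> assume "\<mu> \<in> {\<mu>\<in>S. \<mu> j = a}"
        hence "\<mu>(j:=0, j:=a) = \<mu>" by auto
        moreover have "(\<Prod>i\<in>UNIV. x$i ^ (\<mu>(j:=0)) i) = M x \<mu>"
          unfolding M_def by (intro prod.cong) auto
        ultimately show "b' (\<mu>(j:=0)) * (\<Prod>i\<in>UNIV. x$i ^ (\<mu>(j:=0)) i) = b \<mu> * M x \<mu>"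
          by (simp add: b'_def)
      qed
      also have "\<dots> = 0" using inner[OF aA] by blast
      finally show "(\<Sum>\<mu>\<in>S'. b' \<mu> * (\<Prod>i\<in>UNIV. x$i ^ \<mu> i)) = 0" .
    qed
    have "\<nu>(j:=0) \<in> S'" using nS by (auto simp: S'_def a_def)
    hence "b' (\<nu>(j:=0)) = 0" using insert.IH IH1 IH2 IH3 by (meson)
    thus "b \<nu> = 0" by (simp add: b'_def a_def)
  qed
qed

lemma multi_indep:
  fixes b :: "('n::finite \<Rightarrow> nat) \<Rightarrow> real"
  assumes "finite S" "\<And>(x::real^'n). (\<Sum>\<nu>\<in>S. b \<nu> * (\<Prod>i\<in>UNIV. x$i ^ \<nu> i)) = 0" "\<nu> \<in> S"
  shows "b \<nu> = 0"
  apply (rule multi_indep_gen[of UNIV, rule_format])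
  using assms by auto
definition AA :: "'n::finite set \<Rightarrow> nat \<Rightarrow> ('n \<Rightarrow> nat) set" where
  "AA J j = {u. (\<forall>i. i \<notin> J \<longrightarrow> u i = 0) \<and> sum u UNIV = j}"

lemma AA_finite:
  fixes J :: "'n::finite set"
  shows "finite (AA J j)"
proof -
  have "AA J j \<subseteq> Pi\<^sub>E UNIV (\<lambda>_. {..j})"
  proof
    fix u assume u: "u \<in> AA J j"
    have "u i \<le> j" for i using member_le_sum[of i UNIV u] u by (simp add: AA_def)
    thus "u \<in> Pi\<^sub>E UNIV (\<lambda>_. {..j})" by (auto simp: PiE_UNIV_domain)
  qed
  moreover have "finite (Pi\<^sub>E (UNIV::'n set) (\<lambda>_. {..j}))" by (intro finite_PiE) auto
  ultimately show ?thesis by (rule finite_subset)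
qed

lemma AA_empty: "AA {} j = (if j = 0 then {\<lambda>_. 0} else {})"
  by (auto simp: AA_def)

lemma AA_insert:
  assumes "a \<notin> J"
  shows "card (AA (insert a J) j) = (\<Sum>i=0..j. card (AA J i))"
proof -
  have eq: "AA (insert a J) j = (\<Union>i\<in>{0..j}. (\<lambda>u. u(a := j - i)) ` AA J i)"
  proof (intro equalityI subsetI)
    fix v assume v: "v \<in> AA (insert a J) j"
    have vj: "v a \<le> j" using v member_le_sum[of a UNIV v] by (auto simp: AA_def)
    define u where "u = v(a := 0)"
    have su: "sum v UNIV = v a + sum u UNIV"
      using sum.remove[of UNIV a v] sum.remove[of UNIV a u] by (simp add: u_def)
    have "u \<in> AA J (j - v a)" using v su by (auto simp: AA_def u_def)
    moreover have "v = u(a := j - (j - v a))" using vj by (auto simp: u_def)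
    ultimately show "v \<in> (\<Union>i\<in>{0..j}. (\<lambda>u. u(a := j - i)) ` AA J i)" by force
  next
    fix v assume "v \<in> (\<Union>i\<in>{0..j}. (\<lambda>u. u(a := j - i)) ` AA J i)"
    then obtain i u where i: "i \<le> j" and u: "u \<in> AA J i" and v: "v = u(a := j - i)" by auto
    have ua: "u a = 0" using u assms by (auto simp: AA_def)
    have "sum v UNIV = v a + sum (v(a:=0)) UNIV"
      using sum.remove[of UNIV a v] sum.remove[of UNIV a "v(a:=0)"] by simp
    also have "v(a:=0) = u" using ua v by auto
    finally have "sum v UNIV = j" using u i v by (simp add: AA_def)
    thus "v \<in> AA (insert a J) j" using u v by (auto simp: AA_def)
  qed
  have inj: "inj_on (\<lambda>u. u(a := j - i)) (AA J i)" for i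
  proof (rule inj_onI)
    fix u v assume "u \<in> AA J i" "v \<in> AA J i" "u(a := j - i) = v(a := j - i)"
    hence uv: "u a = v a" "u(a := j - i) = v(a := j - i)" using assms by (auto simp: AA_def)
    show "u = v"
    proof
      fix k show "u k = v k" using uv(1) fun_cong[OF uv(2), of k] by (cases "k = a") simp_all
    qed
  qed
  have "card (AA (insert a J) j) = (\<Sum>i\<in>{0..j}. card ((\<lambda>u. u(a := j - i)) ` AA J i))"
    unfolding eq
  proof (rule card_UN_disjoint)
    show "finite {0..j}" by simp
    show "\<forall>i\<in>{0..j}. finite ((\<lambda>u. u(a := j - i)) ` AA J i)" using AA_finite by auto
    show "\<forall>i\<in>{0..j}. \<forall>i'\<in>{0..j}. i \<noteq> i' \<longrightarrow>
      (\<lambda>u. u(a := j - i)) ` AA J i \<inter> (\<lambda>u. u(a := j - i')) ` AA J i' = {}"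
    proof (intro ballI impI)
      fix i i' assume "i \<in> {0..j}" "i' \<in> {0..j}" "i \<noteq> i'"
      hence "j - i \<noteq> j - i'" by auto
      thus "(\<lambda>u. u(a := j - i)) ` AA J i \<inter> (\<lambda>u. u(a := j - i')) ` AA J i' = {}"
        by (auto dest: fun_cong[where x=a])
    qed
  qed
  also have "\<dots> = (\<Sum>i=0..j. card (AA J i))"
    by (intro sum.cong refl card_image inj)
  finally show ?thesis .
qed

definition ones_fps :: "real fps" where "ones_fps = Abs_fps (\<lambda>_. 1)"

lemma AA_fps:
  fixes J :: "'n::finite set"
  shows "Abs_fps (\<lambda>j. of_nat (card (AA J j)) :: real) = ones_fps ^ card J"
proof -
  have "finite J" by simp
  thus ?thesis
  proof (induction J rule: finite_induct)
    case empty
    show ?case by (simp add: AA_empty fps_eq_iff)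
  next
    case (insert a J)
    have "Abs_fps (\<lambda>j. of_nat (card (AA (insert a J) j)) :: real)
        = Abs_fps (\<lambda>j. of_nat (card (AA J j))) * ones_fps"
      by (simp add: fps_eq_iff fps_mult_nth ones_fps_def AA_insert[OF insert(2)])
    thus ?case using insert by simp
  qed
qed

lemma ones_fls: "1 / (fls_X_inv - 1) = fls_X * fps_to_fls ones_fps"
proof -
  have o: "ones_fps * (1 - fps_X) = 1"
    using inverse_mult_eq_1'[of ones_fps] fps_inverse_gp'[where 'a=real]
    by (simp add: ones_fps_def)
  have xx: "fls_X * fls_X_inv = (1 :: real fls)"
    by (simp add: fls_X_inv_times_conv_shift)
  have "fls_X * fps_to_fls ones_fps * (fls_X_inv - 1) = fps_to_fls ones_fps * (fls_X * fls_X_inv) - fls_X * fps_to_fls ones_fps"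
    by (simp add: algebra_simps)
  also have "\<dots> = fps_to_fls (ones_fps * (1 - fps_X))"
    by (simp add: xx fls_times_fps_to_fls algebra_simps)
  also have "\<dots> = 1" by (simp add: o)
  finally have h: "fls_X * fps_to_fls ones_fps * (fls_X_inv - 1) = 1" .
  hence "fls_X_inv - 1 \<noteq> (0::real fls)" by auto
  with h show ?thesis by (simp add: field_simps)
qed
lemma weights:
  fixes c :: "('n::finite \<Rightarrow> nat) \<Rightarrow> real" and delta :: "'n \<Rightarrow> nat"
  assumes fin: "finite {nu. c nu \<noteq> 0}"
    and wh: "weighted_homogeneous c"
    and delta: "\<And>i. delta i \<ge> 1 \<and> c (pure_mono i (delta i)) \<noteq> 0"
    and cnu: "c \<nu> \<noteq> 0"
  shows "(\<Sum>i\<in>UNIV. real (\<nu> i) / real (delta i)) = 1"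
proof -
  obtain w :: "'n \<Rightarrow> nat" and W :: nat where wpos: "\<forall>i. w i > 0" and Wpos: "W > 0"
    and hom: "\<And>(l::real) x. poly_eval c (\<chi> i. l ^ (w i) * x$i) = l ^ W * poly_eval c x"
    using wh unfolding weighted_homogeneous_def by blast
  define S where "S = {nu. c nu \<noteq> 0}"
  have key: "(\<Sum>i\<in>UNIV. w i * \<mu> i) = W" if "c \<mu> \<noteq> 0" for \<mu>
  proof -
    have "(\<Sum>\<nu>\<in>S. (c \<nu> * (2 ^ (\<Sum>i\<in>UNIV. w i * \<nu> i) - 2 ^ W)) * (\<Prod>i\<in>UNIV. x$i ^ \<nu> i)) = 0"
      for x :: "real^'n"
    proof -
      have "(\<Sum>\<nu>\<in>S. (c \<nu> * (2 ^ (\<Sum>i\<in>UNIV. w i * \<nu> i) - 2 ^ W)) * (\<Prod>i\<in>UNIV. x$i ^ \<nu> i))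
        = (\<Sum>\<nu>\<in>S. c \<nu> * (\<Prod>i\<in>UNIV. ((2::real) ^ w i * x$i) ^ \<nu> i)) - 2 ^ W * (\<Sum>\<nu>\<in>S. c \<nu> * (\<Prod>i\<in>UNIV. x$i ^ \<nu> i))"
      proof -
        have "(\<Prod>i\<in>UNIV. ((2::real) ^ w i * x$i) ^ \<nu> i) = 2 ^ (\<Sum>i\<in>UNIV. w i * \<nu> i) * (\<Prod>i\<in>UNIV. x$i ^ \<nu> i)" for \<nu>
          by (simp add: power_mult_distrib prod.distrib power_sum power_mult)
        thus ?thesis by (simp add: sum_distrib_left sum_subtractf algebra_simps)
      qed
      also have "\<dots> = 0" using hom[of 2 x] by (simp add: poly_eval_def S_def)
      finally show ?thesis .
    qed
    hence "c \<mu> * (2 ^ (\<Sum>i\<in>UNIV. w i * \<mu> i) - 2 ^ W) = 0"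
      using multi_indep[of S "\<lambda>\<nu>. c \<nu> * (2 ^ (\<Sum>i\<in>UNIV. w i * \<nu> i) - 2 ^ W)" \<mu>] fin that
      by (simp add: S_def)
    hence "(2::real) ^ (\<Sum>i\<in>UNIV. w i * \<mu> i) = 2 ^ W" using that by simp
    thus ?thesis by (metis power_inject_exp one_less_numeral_iff semiring_norm(76) of_nat_numeral)
  qed
  have wd: "w i * delta i = W" for i
  proof -
    have "W = (\<Sum>j\<in>UNIV. w j * pure_mono i (delta i) j)" using key[of "pure_mono i (delta i)"] delta[of i] by simp
    also have "\<dots> = (\<Sum>j\<in>UNIV. if j = i then w i * delta i else 0)"
      by (intro sum.cong refl) (simp add: pure_mono_def)
    also have "\<dots> = w i * delta i" by simp
    finally show ?thesis by simp
  qed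
  have "(\<Sum>i\<in>UNIV. real (\<nu> i) / real (delta i)) = (\<Sum>i\<in>UNIV. real (w i * \<nu> i) / real W)"
  proof (intro sum.cong refl)
    fix i
    have "real W = real (w i) * real (delta i)" using wd[of i] by (metis of_nat_mult)
    moreover have "real (delta i) > 0" using delta[of i] by simp
    ultimately show "real (\<nu> i) / real (delta i) = real (w i * \<nu> i) / real W"
      using wpos by (simp add: field_simps)
  qed
  also have "\<dots> = real (\<Sum>i\<in>UNIV. w i * \<nu> i) / real W" by (simp add: sum_divide_distrib)
  also have "\<dots> = 1" using key[OF cnu] Wpos by simp
  finally show ?thesis .
qed
definition GG :: "('n::finite \<Rightarrow> nat) \<Rightarrow> (real^'n) set" where
  "GG delta = {x. (\<forall>i. 0 \<le> x$i) \<and> 1 \<le> (\<Sum>i\<in>UNIV. x$i / real (delta i))}"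

definition TT :: "('n::finite \<Rightarrow> nat) \<Rightarrow> 'n set \<Rightarrow> (real^'n) set" where
  "TT delta I = {x. (\<forall>i. 0 \<le> x$i) \<and> (\<Sum>i\<in>UNIV. x$i / real (delta i)) = 1 \<and> (\<forall>i. i \<notin> I \<longrightarrow> x$i = 0)}"

lemma axis_comp: "(axis i a :: real^'n::finite) $ j = (if j = i then a else 0)"
  by (simp add: axis_def)

lemma sum_axis: "(\<Sum>j\<in>UNIV. (axis i a :: real^'n::finite) $ j / real (delta j)) = a / real (delta i)"
proof -
  have "(\<Sum>j\<in>UNIV. (axis i a :: real^'n) $ j / real (delta j)) = (\<Sum>j\<in>UNIV. if j = i then a / real (delta i) else 0)"
    by (intro sum.cong refl) (simp add: axis_comp)
  also have "\<dots> = a / real (delta i)" by simp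
  finally show ?thesis .
qed

lemma convex_GG: "convex (GG delta)"
proof (rule convexI)
  fix x y :: "real^'a" and u v :: real
  assume x: "x \<in> GG delta" and y: "y \<in> GG delta" and uv: "0 \<le> u" "0 \<le> v" "u + v = 1"
  have "(\<Sum>i\<in>UNIV. (u *\<^sub>R x + v *\<^sub>R y)$i / real (delta i))
      = u * (\<Sum>i\<in>UNIV. x$i / real (delta i)) + v * (\<Sum>i\<in>UNIV. y$i / real (delta i))"
    by (simp add: sum.distrib sum_distrib_left add_divide_distrib)
  also have "\<dots> \<ge> u * 1 + v * 1"
    using x y uv by (intro add_mono mult_left_mono) (auto simp: GG_def)
  finally have "1 \<le> (\<Sum>i\<in>UNIV. (u *\<^sub>R x + v *\<^sub>R y)$i / real (delta i))" using uv by simp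
  moreover have "\<forall>i. 0 \<le> (u *\<^sub>R x + v *\<^sub>R y)$i" using x y uv by (auto simp: GG_def)
  ultimately show "u *\<^sub>R x + v *\<^sub>R y \<in> GG delta" by (simp add: GG_def)
qed

lemma newton_eq:
  fixes c :: "('n::finite \<Rightarrow> nat) \<Rightarrow> real" and delta :: "'n \<Rightarrow> nat"
  assumes wts: "\<And>\<nu>. c \<nu> \<noteq> 0 \<Longrightarrow> (\<Sum>i\<in>UNIV. real (\<nu> i) / real (delta i)) = 1"
    and delta: "\<And>i. delta i \<ge> 1 \<and> c (pure_mono i (delta i)) \<noteq> 0"
  shows "newton_polyhedron c = GG delta"
proof
  show "newton_polyhedron c \<subseteq> GG delta" unfolding newton_polyhedron_def
  proof (rule hull_minimal[where S=convex, OF _ convex_GG[of delta]])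
    show "(\<Union>\<nu>\<in>{\<nu>. c \<nu> \<noteq> 0}. {x. \<forall>i. real (\<nu> i) \<le> x$i}) \<subseteq> GG delta"
    proof clarify
      fix \<nu> and x :: "real^'n" assume c: "c \<nu> \<noteq> 0" and le: "\<forall>i. real (\<nu> i) \<le> x$i"
      have "1 = (\<Sum>i\<in>UNIV. real (\<nu> i) / real (delta i))" using wts[OF c] by simp
      also have "\<dots> \<le> (\<Sum>i\<in>UNIV. x$i / real (delta i))"
        using le by (intro sum_mono divide_right_mono) auto
      moreover have "0 \<le> x$i" for i using le of_nat_0_le_iff[of "\<nu> i"] by (meson order_trans)
      ultimately show "x \<in> GG delta" unfolding GG_def by auto
    qed
  qed
  show "GG delta \<subseteq> newton_polyhedron c"
  proof
    fix x assume x: "x \<in> GG delta"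
    define s where "s = (\<Sum>i\<in>UNIV. x$i / real (delta i))"
    have s1: "1 \<le> s" using x by (simp add: GG_def s_def)
    have dpos: "real (delta i) > 0" for i using delta[of i] by simp
    define p where "p i = (axis i (s * real (delta i)) :: real^'n)" for i
    have p_in: "p i \<in> newton_polyhedron c" for i
      unfolding newton_polyhedron_def
    proof (rule hull_inc, rule UN_I)
      show "pure_mono i (delta i) \<in> {\<nu>. c \<nu> \<noteq> 0}" using delta[of i] by simp
      show "p i \<in> {x. \<forall>j. real (pure_mono i (delta i) j) \<le> x$j}"
        using s1 dpos[of i] by (auto simp: p_def axis_comp pure_mono_def)
    qed
    have "(\<Sum>i\<in>UNIV. (x$i / (s * real (delta i))) *\<^sub>R p i) \<in> newton_polyhedron c"
      unfolding newton_polyhedron_def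
    proof (rule convex_sum)
      show "finite (UNIV :: 'n set)" by simp
      show "convex (convex hull (\<Union>\<nu>\<in>{\<nu>. c \<nu> \<noteq> 0}. {x. \<forall>i. real (\<nu> i) \<le> x $ i}))" by simp
      have "(\<Sum>i\<in>UNIV. x$i / (s * real (delta i))) = (\<Sum>i\<in>UNIV. x$i / real (delta i)) / s"
        by (simp add: sum_divide_distrib mult.commute)
      thus "(\<Sum>i\<in>UNIV. x$i / (s * real (delta i))) = 1" using s1 by (simp add: s_def)
      show "0 \<le> x$i / (s * real (delta i))" for i using x s1 dpos[of i] by (simp add: GG_def)
      show "p i \<in> convex hull (\<Union>\<nu>\<in>{\<nu>. c \<nu> \<noteq> 0}. {x. \<forall>i. real (\<nu> i) \<le> x $ i})" for i
        using p_in[of i] by (simp add: newton_polyhedron_def)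
    qed
    moreover have "(\<Sum>i\<in>UNIV. (x$i / (s * real (delta i))) *\<^sub>R p i) = x"
    proof (subst vec_eq_iff, rule allI)
      fix j
      have "(\<Sum>i\<in>UNIV. (x$i / (s * real (delta i))) *\<^sub>R p i) $ j
          = (\<Sum>i\<in>UNIV. if i = j then x$j else 0)"
        using s1 dpos by (intro trans[OF sum_component] sum.cong refl) (auto simp: p_def axis_comp)
      also have "\<dots> = x$j" by simp
      finally show "(\<Sum>i\<in>UNIV. (x$i / (s * real (delta i))) *\<^sub>R p i) $ j = x$j" .
    qed
    ultimately show "x \<in> newton_polyhedron c" by simp
  qed
qed
lemma GG_axis:
  assumes "real (delta i) \<le> a" "delta i \<ge> 1"
  shows "(axis i a :: real^'n::finite) \<in> GG delta"
proof -
  have "1 \<le> a / real (delta i)" using assms by simp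
  moreover have "0 \<le> (axis i a :: real^'n) $ j" for j using assms by (simp add: axis_comp)
  ultimately show ?thesis unfolding GG_def mem_Collect_eq sum_axis by blast
qed

lemma axis_point:
  fixes tau :: "(real^'n::finite) set"
  assumes face: "tau face_of GG delta" and cpt: "compact tau" and dpos: "\<And>i. delta i \<ge> 1"
    and ax: "axis i a \<in> tau"
  shows "a = real (delta i)"
proof (rule ccontr)
  assume ne: "a \<noteq> real (delta i)"
  have d0: "real (delta i) > 0" using dpos[of i] by simp
  have "axis i a \<in> GG delta" using ax face face_of_imp_subset by blast
  hence "1 \<le> a / real (delta i)" by (simp add: GG_def sum_axis)
  hence ad: "a > real (delta i)" using ne d0 by (simp add: field_simps)
  obtain B where B: "\<And>x. x \<in> tau \<Longrightarrow> norm x \<le> B"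
    using compact_imp_bounded[OF cpt] unfolding bounded_iff by blast
  define b where "b = max (a + 1) (B + 1)"
  have ab: "a < b" by (simp add: b_def)
  define u where "u = (a - real (delta i)) / (b - real (delta i))"
  have u: "0 < u" "u < 1" using ad ab by (auto simp: u_def field_simps)
  have "axis i a \<in> open_segment (axis i (real (delta i))) (axis i b)"
    unfolding in_segment(2)
  proof (intro conjI exI)
    show "axis i (real (delta i)) \<noteq> (axis i b :: real^'n)" using ad ab by (simp add: axis_eq_axis)
    show "0 < u" "u < 1" by (fact u)+
    have "u * (b - real (delta i)) = a - real (delta i)" using ad ab by (simp add: u_def)
    hence "a = (1 - u) * real (delta i) + u * b" by (simp add: algebra_simps)
    thus "axis i a = (1 - u) *\<^sub>R axis i (real (delta i)) + u *\<^sub>R (axis i b :: real^'n)"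
      by (simp add: vec_eq_iff axis_comp)
  qed
  moreover have "axis i (real (delta i)) \<in> GG delta" using dpos by (intro GG_axis) auto
  moreover have "axis i b \<in> GG delta" using dpos ad ab by (intro GG_axis) auto
  ultimately have "axis i b \<in> tau" using face_ofD[OF face] ax by blast
  hence "norm (axis i b :: real^'n) \<le> B" by (rule B)
  moreover have "\<bar>(axis i b :: real^'n) $ i\<bar> \<le> norm (axis i b :: real^'n)" by (rule component_le_norm_cart)
  ultimately show False by (simp add: b_def)
qed

lemma tau_eq:
  fixes tau :: "(real^'n::finite) set"
  assumes face: "tau face_of GG delta" and cpt: "compact tau" and dpos: "\<And>i. delta i \<ge> 1"
    and axes: "\<And>i. (\<exists>x\<in>tau. \<forall>j. j \<noteq> i \<longrightarrow> x$j = 0) \<longleftrightarrow> i \<in> I"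
  shows "tau = TT delta I"
proof
  have dp: "real (delta i) > 0" for i using dpos[of i] by simp
  have axisI: "i \<in> I" if "axis i a \<in> tau" for i a
  proof -
    have "\<forall>j. j \<noteq> i \<longrightarrow> (axis i a :: real^'n) $ j = 0" by (simp add: axis_comp)
    thus ?thesis using axes[of i] that by blast
  qed
  show "tau \<subseteq> TT delta I"
  proof
    fix y assume yt: "y \<in> tau"
    have yG: "y \<in> GG delta" using yt face face_of_imp_subset by blast
    define s where "s = (\<Sum>j\<in>UNIV. y$j / real (delta j))"
    have s1: "1 \<le> s" and ynn: "\<And>j. 0 \<le> y$j" using yG by (auto simp: GG_def s_def)
    have claim: "axis i (s * real (delta i)) \<in> tau" if yi: "y$i > 0" for i
    proof (cases "\<forall>j. j \<noteq> i \<longrightarrow> y$j = 0")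
      case True
      hence yax: "y = axis i (y$i)" by (auto simp: vec_eq_iff axis_comp)
      hence "s = y$i / real (delta i)" unfolding s_def by (metis sum_axis)
      hence "y$i = s * real (delta i)" using dp[of i] by (simp add: field_simps)
      thus ?thesis using yax yt by simp
    next
      case False
      then obtain j where ji: "j \<noteq> i" and yj: "y$j \<noteq> 0" by blast
      have yj': "y$j > 0" using yj ynn[of j] by simp
      have "y$i / real (delta i) + y$j / real (delta j) = (\<Sum>k\<in>{i,j}. y$k / real (delta k))"
        using ji by simp
      also have "\<dots> \<le> s" unfolding s_def
        by (rule sum_mono2) (use ynn dp in \<open>auto intro: divide_nonneg_pos\<close>)
      finally have lt: "y$i / real (delta i) < s" using yj' dp[of j] by (smt (verit) divide_pos_pos)
      define l where "l = y$i / (s * real (delta i))"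
      have l: "0 < l" "l < 1" using yi lt s1 dp[of i] by (auto simp: l_def field_simps)
      define z where "z = (\<chi> k. if k = i then 0 else y$k / (1 - l))"
      have "(\<Sum>k\<in>UNIV. z$k / real (delta k)) = (\<Sum>k\<in>UNIV. (y$k / real (delta k)) / (1 - l) - (if k = i then (y$i / real (delta i)) / (1 - l) else 0))"
        by (intro sum.cong refl) (simp add: z_def)
      also have "\<dots> = s / (1 - l) - (y$i / real (delta i)) / (1 - l)"
        by (simp add: sum_subtractf s_def sum_divide_distrib)
      also have "\<dots> = (s - y$i / real (delta i)) / (1 - l)" by (simp add: diff_divide_distrib)
      also have "1 - l = (s - y$i / real (delta i)) / s" using s1 dp[of i] by (simp add: l_def field_simps)
      also have "(s - y$i / real (delta i)) / ((s - y$i / real (delta i)) / s) = s"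
        using lt s1 by simp
      finally have zs: "(\<Sum>k\<in>UNIV. z$k / real (delta k)) = s" .
      have zG: "z \<in> GG delta" using zs s1 ynn l by (auto simp: GG_def z_def)
      have aG: "axis i (s * real (delta i)) \<in> GG delta"
        using s1 dp[of i] dpos by (intro GG_axis) auto
      have "y \<in> open_segment z (axis i (s * real (delta i)))"
        unfolding in_segment(2)
      proof (intro conjI exI)
        show "z \<noteq> axis i (s * real (delta i))"
          using s1 dp[of i] by (auto simp: vec_eq_iff z_def axis_comp)
        show "0 < l" "l < 1" by (fact l)+
        show "y = (1 - l) *\<^sub>R z + l *\<^sub>R axis i (s * real (delta i))"
          using l s1 dp[of i] by (auto simp: vec_eq_iff z_def axis_comp l_def)
      qed
      thus ?thesis using face_ofD[OF face _ zG aG yt] by blast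
    qed
    have "\<exists>i. y$i > 0"
    proof (rule ccontr)
      assume "\<not> (\<exists>i. y$i > 0)"
      hence "\<forall>i. y$i = 0" using ynn by (meson not_less antisym)
      hence "s = 0" by (simp add: s_def)
      thus False using s1 by simp
    qed
    then obtain i where yi: "y$i > 0" by blast
    have "s * real (delta i) = real (delta i)"
      using axis_point[OF face cpt dpos claim[OF yi]] .
    hence s_1: "s = 1" using dp[of i] by simp
    have "y$j = 0" if "j \<notin> I" for j
    proof (rule ccontr)
      assume "y$j \<noteq> 0"
      hence "y$j > 0" using ynn[of j] by simp
      hence "j \<in> I" using axisI claim by blast
      thus False using that by simp
    qed
    thus "y \<in> TT delta I" using s_1 ynn by (auto simp: TT_def s_def)
  qed
  show "TT delta I \<subseteq> tau"
  proof
    fix y assume y: "y \<in> TT delta I"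
    have axin: "axis i (real (delta i)) \<in> tau" if iI: "i \<in> I" for i
    proof -
      obtain x where x: "x \<in> tau" "\<forall>j. j \<noteq> i \<longrightarrow> x$j = 0" using axes[of i] iI by blast
      hence "x = axis i (x$i)" by (auto simp: vec_eq_iff axis_comp)
      hence "axis i (x$i) \<in> tau" using x by simp
      hence "x$i = real (delta i)" using axis_point[OF face cpt dpos] by blast
      thus ?thesis using \<open>axis i (x$i) \<in> tau\<close> by simp
    qed
    have "(\<Sum>i\<in>I. (y$i / real (delta i)) *\<^sub>R axis i (real (delta i))) \<in> tau"
    proof (rule convex_sum)
      show "finite I" by simp
      show "convex tau" using face face_of_imp_convex by blast
      have "(\<Sum>i\<in>I. y$i / real (delta i)) = (\<Sum>i\<in>UNIV. y$i / real (delta i))"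
        using y by (intro sum.mono_neutral_left) (auto simp: TT_def)
      thus "(\<Sum>i\<in>I. y$i / real (delta i)) = 1" using y by (simp add: TT_def)
      show "0 \<le> y$i / real (delta i)" for i using y by (simp add: TT_def)
      show "axis i (real (delta i)) \<in> tau" if "i \<in> I" for i using axin that by blast
    qed
    moreover have "(\<Sum>i\<in>I. (y$i / real (delta i)) *\<^sub>R axis i (real (delta i))) = y"
    proof (subst vec_eq_iff, rule allI)
      fix j
      have "(\<Sum>i\<in>I. (y$i / real (delta i)) *\<^sub>R (axis i (real (delta i)) :: real^'n)) $ j
          = (\<Sum>i\<in>I. if i = j then y$j else 0)"
        using dp by (intro trans[OF sum_component] sum.cong refl) (auto simp: axis_comp)
      also have "\<dots> = y$j" using y by (auto simp: TT_def)
      finally show "(\<Sum>i\<in>I. (y$i / real (delta i)) *\<^sub>R axis i (real (delta i))) $ j = y$j" .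
    qed
    ultimately show "y \<in> tau" by simp
  qed
qed
lemma supp_GG:
  fixes k :: "real^'n::finite"
  assumes knn: "\<forall>i. 0 \<le> k$i" and dpos: "\<And>i. delta i \<ge> 1"
  shows "supp_fun (GG delta) k = Min (range (\<lambda>i. k$i * real (delta i)))"
  unfolding supp_fun_def
proof (rule cInf_eq_minimum)
  define m where "m = Min (range (\<lambda>i. k$i * real (delta i)))"
  have "m \<in> range (\<lambda>i. k$i * real (delta i))" unfolding m_def by (rule Min_in) auto
  then obtain i0 where i0: "m = k$i0 * real (delta i0)" by blast
  have mle: "m \<le> k$i * real (delta i)" for i unfolding m_def by simp
  have m0: "0 \<le> m" using i0 knn by simp
  have "axis i0 (real (delta i0)) \<in> GG delta" using dpos by (intro GG_axis) auto
  moreover have "k \<bullet> axis i0 (real (delta i0)) = m" using i0 by (simp add: inner_axis)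
  ultimately show "m \<in> (\<lambda>x. k \<bullet> x) ` GG delta" by force
  fix y assume "y \<in> (\<lambda>x. k \<bullet> x) ` GG delta"
  then obtain x where x: "x \<in> GG delta" and y: "y = k \<bullet> x" by blast
  have dp: "real (delta i) > 0" for i using dpos[of i] by simp
  have "m \<le> m * (\<Sum>i\<in>UNIV. x$i / real (delta i))" using x m0 by (simp add: GG_def mult_le_cancel_left1)
  also have "\<dots> = (\<Sum>i\<in>UNIV. m / real (delta i) * x$i)" by (simp add: sum_distrib_left)
  also have "\<dots> \<le> (\<Sum>i\<in>UNIV. k$i * x$i)"
  proof (rule sum_mono)
    fix i
    have "m / real (delta i) \<le> k$i" using mle[of i] dp[of i] by (simp add: field_simps)
    thus "m / real (delta i) * x$i \<le> k$i * x$i" using x by (intro mult_right_mono) (auto simp: GG_def)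
  qed
  also have "\<dots> = y" by (simp add: y inner_vec_def)
  finally show "m \<le> y" .
qed

lemma dual_iff:
  fixes \<kappa> :: "'n::finite \<Rightarrow> nat" and delta :: "'n \<Rightarrow> nat"
  assumes dpos: "\<And>i. delta i \<ge> 1" and I: "I \<noteq> {}"
  shows "(exp_vec \<kappa> \<in> dual_cone (GG delta) (TT delta I) \<and> supp_fun (GG delta) (exp_vec \<kappa>) = real n) \<longleftrightarrow>
        (0 < n \<and> (\<forall>i\<in>I. \<kappa> i * delta i = n) \<and> (\<forall>i. i \<notin> I \<longrightarrow> n < \<kappa> i * delta i))"
proof -
  have dp: "real (delta i) > 0" for i using dpos[of i] by simp
  define m where "m = Min (range (\<lambda>i. \<kappa> i * delta i))"
  have ev: "exp_vec \<kappa> $ i = real (\<kappa> i)" for i by (simp add: exp_vec_def)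
  have "supp_fun (GG delta) (exp_vec \<kappa>) = Min (range (\<lambda>i. real (\<kappa> i) * real (delta i)))"
    using supp_GG[of "exp_vec \<kappa>" delta] dpos by (simp add: ev)
  also have "range (\<lambda>i. real (\<kappa> i) * real (delta i)) = real ` range (\<lambda>i. \<kappa> i * delta i)"
    by (auto simp: image_image)
  also have "Min \<dots> = real m" unfolding m_def
    by (rule mono_Min_commute[symmetric]) (auto simp: mono_def)
  finally have supp: "supp_fun (GG delta) (exp_vec \<kappa>) = real m" .
  have mle: "m \<le> \<kappa> i * delta i" for i unfolding m_def by simp
  have "m \<in> range (\<lambda>i. \<kappa> i * delta i)" unfolding m_def by (rule Min_in) auto
  then obtain i0 where i0: "m = \<kappa> i0 * delta i0" by blast
  have inn: "exp_vec \<kappa> \<bullet> x = (\<Sum>i\<in>UNIV. real (\<kappa> i) * x$i)" for x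
    by (simp add: inner_vec_def ev)
  define F where "F = {x \<in> GG delta. exp_vec \<kappa> \<bullet> x = real m}"
  have dc: "exp_vec \<kappa> \<in> dual_cone (GG delta) (TT delta I) \<longleftrightarrow> F = TT delta I"
    by (simp add: dual_cone_def supp F_def ev)
  have F1: "axis i (real (delta i)) \<in> F \<longleftrightarrow> \<kappa> i * delta i = m" for i
  proof -
    have "axis i (real (delta i)) \<in> GG delta" using dpos by (intro GG_axis) auto
    moreover have "exp_vec \<kappa> \<bullet> axis i (real (delta i)) = real (\<kappa> i * delta i)"
      by (simp add: inner_axis ev)
    ultimately show ?thesis unfolding F_def by (simp only: mem_Collect_eq of_nat_eq_iff) simp
  qed
  have F2: "axis i (real (delta i)) \<in> TT delta I \<longleftrightarrow> i \<in> I" for i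
  proof -
    have s: "(\<Sum>j\<in>UNIV. (axis i (real (delta i)) :: real^'n) $ j / real (delta j)) = 1"
      using dp[of i] by (simp only: sum_axis) simp
    show ?thesis unfolding TT_def mem_Collect_eq s using dp[of i] by (auto simp: axis_comp)
  qed
  show ?thesis
  proof
    assume L: "exp_vec \<kappa> \<in> dual_cone (GG delta) (TT delta I) \<and> supp_fun (GG delta) (exp_vec \<kappa>) = real n"
    hence FT: "F = TT delta I" and mn: "m = n" using dc supp by auto
    have A: "\<forall>i\<in>I. \<kappa> i * delta i = n" using F1 F2 FT mn by blast
    have B: "\<forall>i. i \<notin> I \<longrightarrow> n < \<kappa> i * delta i"
    proof (intro allI impI)
      fix i assume "i \<notin> I"
      hence "\<kappa> i * delta i \<noteq> m" using F1 F2 FT by blast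
      thus "n < \<kappa> i * delta i" using mle[of i] mn by simp
    qed
    have C: "0 < n"
    proof (rule ccontr)
      assume "\<not> 0 < n"
      hence m0: "m = 0" using mn by simp
      hence k0: "\<kappa> i0 = 0" using i0 dpos[of i0] by simp
      define x where "x = (axis i0 (2 * real (delta i0)) :: real^'n)"
      have "x \<in> GG delta" unfolding x_def using dpos[of i0] by (intro GG_axis) auto
      moreover have "exp_vec \<kappa> \<bullet> x = real m" by (simp add: x_def inner_axis ev k0 m0)
      ultimately have "x \<in> TT delta I" using FT by (auto simp: F_def)
      moreover have "(\<Sum>j\<in>UNIV. x $ j / real (delta j)) = 2"
        unfolding x_def using dp[of i0] by (simp only: sum_axis) simp
      ultimately show False by (simp add: TT_def)
    qed
    show "0 < n \<and> (\<forall>i\<in>I. \<kappa> i * delta i = n) \<and> (\<forall>i. i \<notin> I \<longrightarrow> n < \<kappa> i * delta i)"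
      using A B C by blast
  next
    assume R: "0 < n \<and> (\<forall>i\<in>I. \<kappa> i * delta i = n) \<and> (\<forall>i. i \<notin> I \<longrightarrow> n < \<kappa> i * delta i)"
    obtain i1 where i1: "i1 \<in> I" using I by blast
    have mn: "m = n" unfolding m_def
    proof (rule Min_eqI)
      show "finite (range (\<lambda>i. \<kappa> i * delta i))" by simp
      show "n \<le> y" if yr: "y \<in> range (\<lambda>i. \<kappa> i * delta i)" for y
      proof -
        obtain i where y: "y = \<kappa> i * delta i" using yr by blast
        show ?thesis using R unfolding y by (cases "i \<in> I") (auto simp: less_imp_le_nat)
      qed
      have "n = \<kappa> i1 * delta i1" using R i1 by simp
      thus "n \<in> range (\<lambda>i. \<kappa> i * delta i)" by (rule range_eqI)
    qed
    have kge: "real n / real (delta i) \<le> real (\<kappa> i)" for i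
    proof -
      have "n \<le> \<kappa> i * delta i" using R by (cases "i \<in> I") (auto simp: less_imp_le_nat)
      hence "real n \<le> real (\<kappa> i) * real (delta i)" by (metis of_nat_le_iff of_nat_mult)
      thus ?thesis using dp[of i] by (simp add: field_simps)
    qed
    have kgt: "real n / real (delta i) < real (\<kappa> i)" if "i \<notin> I" for i
    proof -
      have "n < \<kappa> i * delta i" using R that by auto
      hence "real n < real (\<kappa> i) * real (delta i)" by (metis of_nat_less_iff of_nat_mult)
      thus ?thesis using dp[of i] by (simp add: field_simps)
    qed
    have keq: "real (\<kappa> i) = real n / real (delta i)" if "i \<in> I" for i
    proof -
      have "\<kappa> i * delta i = n" using R that by simp
      hence "real (\<kappa> i) * real (delta i) = real n" by (metis of_nat_mult)
      thus ?thesis using dp[of i] by (simp add: field_simps)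
    qed
    have "F = TT delta I"
    proof
      show "F \<subseteq> TT delta I"
      proof
        fix x assume x: "x \<in> F"
        hence xG: "x \<in> GG delta" and xe: "(\<Sum>i\<in>UNIV. real (\<kappa> i) * x$i) = real n"
          using mn by (auto simp: F_def inn)
        have xnn: "0 \<le> x$i" for i using xG by (simp add: GG_def)
        define s where "s = (\<Sum>i\<in>UNIV. x$i / real (delta i))"
        have s1: "1 \<le> s" using xG by (simp add: GG_def s_def)
        define t where "t i = (real (\<kappa> i) - real n / real (delta i)) * x$i" for i
        have tnn: "0 \<le> t i" for i using kge[of i] xnn[of i] by (simp add: t_def)
        have e1: "(\<Sum>i\<in>UNIV. t i) = real n - real n * s"
          by (simp add: t_def left_diff_distrib sum_subtractf xe s_def sum_distrib_left)
        have e2: "real n \<le> real n * s" using s1 mult_left_mono[OF s1, of "real n"] by simp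
        have e3: "0 \<le> (\<Sum>i\<in>UNIV. t i)" using tnn by (simp add: sum_nonneg)
        have st: "(\<Sum>i\<in>UNIV. t i) = 0" using e1 e2 e3 by linarith
        have "real n * s = real n" using e1 e2 e3 by linarith
        hence "s = 1" using R by simp
        moreover have "x$i = 0" if "i \<notin> I" for i
        proof -
          have "t i = 0" using st tnn sum_nonneg_eq_0_iff[of UNIV t] by simp
          thus ?thesis using kgt[OF that] by (simp add: t_def)
        qed
        ultimately show "x \<in> TT delta I" using xnn by (simp add: TT_def s_def)
      qed
      show "TT delta I \<subseteq> F"
      proof
        fix x assume x: "x \<in> TT delta I"
        hence xG: "x \<in> GG delta" by (simp add: TT_def GG_def)
        have "(\<Sum>i\<in>UNIV. real (\<kappa> i) * x$i) = (\<Sum>i\<in>UNIV. real n * (x$i / real (delta i)))"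
        proof (intro sum.cong refl)
          fix i show "real (\<kappa> i) * x$i = real n * (x$i / real (delta i))"
            using x keq[of i] by (cases "i \<in> I") (auto simp: TT_def)
        qed
        also have "\<dots> = real n * (\<Sum>i\<in>UNIV. x$i / real (delta i))" by (rule sum_distrib_left[symmetric])
        also have "\<dots> = real n" using x by (simp add: TT_def)
        finally show "x \<in> F" using xG mn by (simp add: F_def inn)
      qed
    qed
    thus "exp_vec \<kappa> \<in> dual_cone (GG delta) (TT delta I) \<and> supp_fun (GG delta) (exp_vec \<kappa>) = real n"
      using dc supp mn by simp
  qed
qed
lemma count_shift:
  fixes b :: "'n::finite \<Rightarrow> nat" and I :: "'n set"
  shows "card {k. ((\<forall>i. b i \<le> k i) \<and> (\<forall>i\<in>I. k i = b i)) \<and> sum k UNIV = j}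
    = (if j < sum b UNIV then 0 else card (AA (- I) (j - sum b UNIV)))"
proof (cases "j < sum b UNIV")
  case True
  have "{k. ((\<forall>i. b i \<le> k i) \<and> (\<forall>i\<in>I. k i = b i)) \<and> sum k UNIV = j} = {}"
  proof (rule ccontr)
    assume "\<not> ?thesis"
    then obtain k where k: "\<forall>i. b i \<le> k i" "sum k UNIV = j" by blast
    have "sum b UNIV \<le> sum k UNIV" using k(1) by (intro sum_mono) auto
    thus False using True k(2) by simp
  qed
  thus ?thesis using True by (simp only: card.empty if_True)
next
  case False
  define B where "B = sum b UNIV"
  have eq: "{k. ((\<forall>i. b i \<le> k i) \<and> (\<forall>i\<in>I. k i = b i)) \<and> sum k UNIV = j}
      = (\<lambda>u i. b i + u i) ` AA (- I) (j - B)"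
  proof (intro equalityI subsetI)
    fix k assume "k \<in> {k. ((\<forall>i. b i \<le> k i) \<and> (\<forall>i\<in>I. k i = b i)) \<and> sum k UNIV = j}"
    hence k: "\<forall>i. b i \<le> k i" "\<forall>i\<in>I. k i = b i" "sum k UNIV = j" by auto
    define u where "u i = k i - b i" for i
    have "sum u UNIV = sum k UNIV - sum b UNIV"
      unfolding u_def by (rule sum_subtractf_nat) (use k in auto)
    hence "u \<in> AA (- I) (j - B)" using k by (auto simp: AA_def u_def B_def)
    moreover have "k = (\<lambda>i. b i + u i)" using k by (auto simp: u_def)
    ultimately show "k \<in> (\<lambda>u i. b i + u i) ` AA (- I) (j - B)" by blast
  next
    fix k assume "k \<in> (\<lambda>u i. b i + u i) ` AA (- I) (j - B)"
    then obtain u where u: "u \<in> AA (- I) (j - B)" and k: "k = (\<lambda>i. b i + u i)" by blast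
    have "sum k UNIV = B + (j - B)" using u by (simp add: k sum.distrib AA_def B_def)
    thus "k \<in> {k. ((\<forall>i. b i \<le> k i) \<and> (\<forall>i\<in>I. k i = b i)) \<and> sum k UNIV = j}"
      using u False by (auto simp: k AA_def B_def)
  qed
  have inj: "inj_on (\<lambda>u i. b i + u i) (AA (- I) (j - B))"
    by (rule inj_onI) (auto simp: fun_eq_iff)
  show ?thesis using False unfolding eq card_image[OF inj] by (simp add: B_def)
qed

theorem lemma4p6:
  fixes c :: "('n::finite \<Rightarrow> nat) \<Rightarrow> real"
    and delta :: "'n \<Rightarrow> nat"
    and I :: "'n set"
    and tau :: "(real^'n) set"
  assumes fin: "finite {nu. c nu \<noteq> 0}"
    and conv: "convenient c"
    and nondeg: "non_degenerate c"
    and wh: "weighted_homogeneous c"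
    and delta: "\<And>i. delta i \<ge> 1 \<and> c (pure_mono i (delta i)) \<noteq> 0"
    and I: "I \<noteq> {}"
    and tau_face: "compact_face c tau"
    and tau_axes: "\<And>i. (\<exists>x\<in>tau. \<forall>j. j \<noteq> i \<longrightarrow> x$j = 0) \<longleftrightarrow> i \<in> I"
  shows "S_series (newton_polyhedron c) tau =
    Abs_fps (\<lambda>n. if (\<exists>r\<ge>1. n = r * Lcm (delta ` I))
       then (1 / (fls_X_inv - 1)) ^ (CARD('n) - card I)
            * fls_X ^ nat (\<Sum>i\<in>UNIV. \<lfloor>real n / real (delta i)\<rfloor>)
       else 0)"
proof -
  have dpos: "\<And>i. delta i \<ge> 1" using delta by blast
  have dp0: "delta i > 0" for i using dpos[of i] by simp
  have wts: "\<And>\<nu>. c \<nu> \<noteq> 0 \<Longrightarrow> (\<Sum>i\<in>UNIV. real (\<nu> i) / real (delta i)) = 1"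
    using weights[OF fin wh delta] by blast
  have G: "newton_polyhedron c = GG delta" by (rule newton_eq[OF wts delta])
  have tf: "tau face_of GG delta" "compact tau" using tau_face G by (auto simp: compact_face_def)
  have T: "tau = TT delta I" by (rule tau_eq[OF tf dpos tau_axes])
  define L where "L = Lcm (delta ` I)"
  define P where "P n k \<longleftrightarrow> 0 < n \<and> (\<forall>i\<in>I. k i * delta i = n) \<and> (\<forall>i. i \<notin> I \<longrightarrow> n < k i * delta i)"
    for n :: nat and k :: "'n \<Rightarrow> nat"
  have seteq: "{k. exp_vec k \<in> dual_cone (newton_polyhedron c) tau \<and> supp_fun (newton_polyhedron c) (exp_vec k) = real n
                      \<and> sum k UNIV = j} = {k. P n k \<and> sum k UNIV = j}" for n j
  proof -
    have dk: "\<And>k n. (exp_vec k \<in> dual_cone (GG delta) (TT delta I) \<and> supp_fun (GG delta) (exp_vec k) = real n) \<longleftrightarrow> P n k"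
      unfolding P_def by (rule dual_iff[OF dpos I])
    show ?thesis unfolding G T by (simp only: dk[symmetric] conj_assoc)
  qed
  show ?thesis
  proof (subst fps_eq_iff, intro allI)
    fix n
    have lhs: "S_series (newton_polyhedron c) tau $ n = fps_to_fls (Abs_fps (\<lambda>j. of_nat (card {k. P n k \<and> sum k UNIV = j})))"
      by (simp add: S_series_def seteq)
    show "S_series (newton_polyhedron c) tau $ n = Abs_fps (\<lambda>n. if (\<exists>r\<ge>1. n = r * Lcm (delta ` I))
       then (1 / (fls_X_inv - 1)) ^ (CARD('n) - card I)
            * fls_X ^ nat (\<Sum>i\<in>UNIV. \<lfloor>real n / real (delta i)\<rfloor>)
       else 0) $ n"
    proof (cases "\<exists>r\<ge>1. n = r * L")
      case False
      have emp: "{k. P n k \<and> sum k UNIV = j} = {}" for j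
      proof (rule ccontr)
        assume "\<not> ?thesis"
        then obtain k where k: "P n k" by blast
        have "L dvd n" unfolding L_def
        proof (rule Lcm_least)
          fix d assume "d \<in> delta ` I"
          then obtain i where "i \<in> I" "d = delta i" by blast
          thus "d dvd n" using k by (auto simp: P_def)
        qed
        then obtain r where r: "n = L * r" by blast
        have "r \<ge> 1" using k r by (cases r) (auto simp: P_def)
        thus False using False r by (auto simp: mult.commute)
      qed
      have z: "Abs_fps (\<lambda>j. of_nat (card {k. P n k \<and> sum k UNIV = j}) :: real) = 0"
        by (simp only: emp card.empty of_nat_0) (simp add: fps_eq_iff)
      have nL: "\<not> (\<exists>r\<ge>1. n = r * Lcm (delta ` I))" using False by (simp add: L_def)
      show ?thesis by (simp only: lhs z fps_zero_to_fls fps_nth_Abs_fps nL if_False)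
    next
      case True
      then obtain r where r: "r \<ge> 1" "n = r * L" by blast
      have dvd: "delta i dvd n" if "i \<in> I" for i
        using that r dvd_Lcm[of "delta i" "delta ` I"] by (auto simp: L_def)
      have "finite (delta ` I)" by simp
      hence Lne: "Lcm (delta ` I) \<noteq> 0" using dp0 Lcm_0_iff[of "delta ` I"] by (metis imageE less_irrefl)
      have L0: "L > 0" unfolding L_def using Lne neq0_conv by blast
      have n0: "n > 0" using r L0 by simp
      define b where "b i = (if i \<in> I then n div delta i else n div delta i + 1)" for i
      have Pq: "P n k \<longleftrightarrow> ((\<forall>i. b i \<le> k i) \<and> (\<forall>i\<in>I. k i = b i))" for k
      proof -
        have a: "k i * delta i = n \<longleftrightarrow> k i = n div delta i" if "i \<in> I" for i
          using dvd[OF that] dp0[of i] by auto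
        have c: "n < k i * delta i \<longleftrightarrow> n div delta i + 1 \<le> k i" for i
          using div_less_iff_less_mult[OF dp0[of i], of n "k i"] by auto
        show ?thesis unfolding P_def b_def using a c n0 by (auto simp: Suc_le_eq)
      qed
      define N where "N = (\<Sum>i\<in>UNIV. n div delta i)"
      have sb: "sum b UNIV = N + card (- I)"
      proof -
        have "sum b UNIV = (\<Sum>i\<in>UNIV. n div delta i + (if i \<in> - I then 1 else 0))"
          by (intro sum.cong refl) (simp add: b_def)
        also have "\<dots> = N + (\<Sum>i\<in>UNIV. (if i \<in> - I then 1 else 0::nat))"
          by (simp only: sum.distrib N_def)
        also have "(\<Sum>i\<in>UNIV. (if i \<in> - I then 1 else 0::nat)) = (\<Sum>i\<in>- I. 1)"
          by (intro sum.mono_neutral_cong_right) auto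
        also have "\<dots> = card (- I)" by simp
        finally show ?thesis .
      qed
      have "Abs_fps (\<lambda>j. of_nat (card {k. P n k \<and> sum k UNIV = j}) :: real)
          = fps_X ^ sum b UNIV * Abs_fps (\<lambda>j. of_nat (card (AA (- I) j)))"
      proof -
        have cs: "card {k. P n k \<and> sum k UNIV = j} = (if j < sum b UNIV then 0 else card (AA (- I) (j - sum b UNIV)))" for j
        proof -
          have "{k. P n k \<and> sum k UNIV = j} = {k. ((\<forall>i. b i \<le> k i) \<and> (\<forall>i\<in>I. k i = b i)) \<and> sum k UNIV = j}"
            using Pq by blast
          thus ?thesis by (simp only: count_shift)
        qed
        show ?thesis by (simp add: fps_eq_iff fps_X_power_mult_nth cs)
      qed
      also have "\<dots> = fps_X ^ sum b UNIV * ones_fps ^ card (- I)" by (simp add: AA_fps)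
      finally have e1: "Abs_fps (\<lambda>j. of_nat (card {k. P n k \<and> sum k UNIV = j}) :: real)
          = fps_X ^ sum b UNIV * ones_fps ^ card (- I)" .
      have "fps_to_fls (fps_X ^ sum b UNIV * ones_fps ^ card (- I))
          = fls_X ^ N * (fls_X * fps_to_fls ones_fps) ^ card (- I)"
        by (simp add: fls_times_fps_to_fls fps_to_fls_power sb power_add power_mult_distrib mult_ac)
      also have "\<dots> = (1 / (fls_X_inv - 1)) ^ (CARD('n) - card I) * fls_X ^ N"
        using card_Diff_subset[of I UNIV] by (simp add: ones_fls Compl_eq_Diff_UNIV mult.commute)
      finally have e2: "fps_to_fls (fps_X ^ sum b UNIV * ones_fps ^ card (- I)) = (1 / (fls_X_inv - 1)) ^ (CARD('n) - card I) * fls_X ^ N" .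
      have Nf: "nat (\<Sum>i\<in>UNIV. \<lfloor>real n / real (delta i)\<rfloor>) = N"
      proof -
        have "(\<Sum>i\<in>UNIV. \<lfloor>real n / real (delta i)\<rfloor>) = (\<Sum>i\<in>UNIV. int (n div delta i))"
          by (intro sum.cong refl) (metis floor_divide_of_nat_eq of_int_of_nat_eq)
        also have "\<dots> = int N" by (simp add: N_def)
        finally show ?thesis by simp
      qed
      show ?thesis using True by (simp add: lhs e1 e2 Nf L_def)
    qed
  qed
qed

end
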